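(* Let $\mathbf{X}^{(1)}$ and $\mathbf{X}^{(2)}$ be $p$-variate random vectors with absolutely continuous distributions (populations $\Pi^{(1)}$, $\Pi^{(2)}$, with prior probabilities $\pi_1,\pi_2$), fix a unit vector $\mathbf{u}\in\mathbb{R}^p$, and let $Q_Z^{(k)}(\theta;\mathbf{u})$ be the $\theta$-quantile of $Z^{(k)}=\mathbf{u}^{\top}\mathbf{X}^{(k)}$. For $\theta\in(0,1)$ let $Q_{\alpha}(\theta;\mathbf{u})=\min_k Q_Z^{(k)}(\theta;\mathbf{u})$ and $Q_{\beta}(\theta;\mathbf{u})=\max_k Q_Z^{(k)}(\theta;\mathbf{u})$, with $G_\alpha,g_\alpha,\pi_\alpha$ (resp. $G_\beta,g_\beta,\pi_\beta$) the distribution function, density and prior probability of the population attaining the minimum (resp. maximum), and let $\tilde Q(\theta;\mathbf{u})=\theta Q_\alpha(\theta;\mathbf{u})+(1-\theta)Q_\beta(\theta;\mathbf{u})$. Assume that the density functions $g_\alpha(z;\mathbf{u})$ and $g_\beta(z;\mathbf{u})$ exist and are nonzero on the same compact domain $\mathcal{Z}$. Further assume that there is a point $z_0$ with $\pi_\alpha g_\alpha(z_0;\mathbf{u})=\pi_\beta g_\beta(z_0;\mathbf{u})$ such that $\pi_\alpha g_\alpha(z;\mathbf{u})>\pi_\beta g_\beta(z;\mathbf{u})$ for $z$ on one side of $z_0$ and $\pi_\alpha g_\alpha(z;\mathbf{u})<\pi_\beta g_\beta(z;\mathbf{u})$ for $z$ on the other side of $z_0$. Then the directional quantile classifier using the quantile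 $\tilde Q(\theta;\mathbf{u})$ with $\theta$ chosen to minimise the theoretical misclassification probability $$1-\psi(\theta)=\pi_\alpha\{1-G_\alpha(\tilde Q(\theta;\mathbf{u});\mathbf{u})\}+\pi_\beta G_\beta(\tilde Q(\theta;\mathbf{u});\mathbf{u})$$ achieves the optimal Bayes misclassification probability (for classifying on the basis of the projected observation).
   Context: The directional quantile classifier at level $\theta$ and direction $\mathbf{u}$ assigns $\mathbf{y}$ to $\Pi^{(1)}$ if $\Phi^{(2)}(\theta;\mathbf{u}^{\top}\mathbf{y})-\Phi^{(1)}(\theta;\mathbf{u}^{\top}\mathbf{y})>0$ and to $\Pi^{(2)}$ otherwise, where $\Phi^{(k)}(\theta;z)=\{\theta+(1-2\theta)I(z-Q_Z^{(k)}(\theta;\mathbf{u})<0)\}\,|z-Q_Z^{(k)}(\theta;\mathbf{u})|$; equivalently it assigns $z=\mathbf{u}^{\top}\mathbf{y}$ to the population attaining $Q_\alpha$ when $z<\tilde Q(\theta;\mathbf{u})$ and to the other population otherwise, and $1-\psi(\theta)$ is its misclassification probability. *)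

theory Defs
  imports "HOL-Probability.Probability"
begin

definition proj_cdf :: "(real^'p) measure \<Rightarrow> real^'p \<Rightarrow> real \<Rightarrow> real" where
  "proj_cdf P u z = measure P {x \<in> space P. u \<bullet> x \<le> z}"

definition quantile :: "(real \<Rightarrow> real) \<Rightarrow> real \<Rightarrow> real" where
  "quantile G \<theta> = Inf {z. \<theta> \<le> G z}"

definition Q_tilde :: "(real^'p) measure \<Rightarrow> (real^'p) measure \<Rightarrow> real^'p \<Rightarrow> real \<Rightarrow> real" where
  "Q_tilde Pa Pb u \<theta> =
     \<theta> * quantile (proj_cdf Pa u) \<theta> + (1 - \<theta>) * quantile (proj_cdf Pb u) \<theta>"

text \<open>Theoretical misclassification probability 1 - psi(theta) of the directional
  quantile classifier (assign z = u'y to Pi_alpha iff z < Q-tilde).\<close>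
definition dq_error :: "real \<Rightarrow> (real^'p) measure \<Rightarrow> real \<Rightarrow> (real^'p) measure \<Rightarrow> real^'p \<Rightarrow> real \<Rightarrow> real" where
  "dq_error \<pi>a Pa \<pi>b Pb u \<theta> =
     \<pi>a * (1 - proj_cdf Pa u (Q_tilde Pa Pb u \<theta>)) + \<pi>b * proj_cdf Pb u (Q_tilde Pa Pb u \<theta>)"

text \<open>Optimal Bayes misclassification probability among all (measurable) classifiers
  based on the projected observation z = u'y: a classifier is a Borel set A of
  values z assigned to Pi_alpha (the complement is assigned to Pi_beta).\<close>
definition bayes_error_proj :: "real \<Rightarrow> (real^'p) measure \<Rightarrow> real \<Rightarrow> (real^'p) measure \<Rightarrow> real^'p \<Rightarrow> real" where
  "bayes_error_proj \<pi>a Pa \<pi>b Pb u =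
     (INF A \<in> sets (borel :: real measure).
        \<pi>a * measure Pa {x \<in> space Pa. u \<bullet> x \<notin> A} + \<pi>b * measure Pb {x \<in> space Pb. u \<bullet> x \<in> A})"

end

theory Submission
  imports Defs
begin

locale dens =
  fixes g :: "real \<Rightarrow> real" and a b :: real
  assumes g_meas[measurable]: "g \<in> borel_measurable borel"
  and ab: "a < b"
  and g_pos: "\<forall>z\<in>{a..b}. g z > 0" and g_zero: "\<forall>z. z \<notin> {a..b} \<longrightarrow> g z = 0"
  and g_prob: "prob_space (density lborel g)"
begin

lemma g_nonneg: "0 \<le> g z" using g_pos g_zero by (metis order.strict_implies_order order_refl)

lemma g_nn_int: "(\<integral>\<^sup>+x. ennreal (g x) \<partial>lborel) = ennreal 1"
proof -
  have "emeasure (density lborel g) UNIV = 1"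
    using prob_space.emeasure_space_1[OF g_prob] by simp
  then show ?thesis by (simp add: emeasure_density)
qed

lemma g_int: "integrable lborel g"
proof -
  have m: "g \<in> borel_measurable lborel" using g_meas by simp
  show ?thesis by (rule integrableI_nn_integral_finite[OF m _ g_nn_int]) (simp add: g_nonneg)
qed

lemma g_integral: "integral\<^sup>L lborel g = 1"
  using nn_integral_eq_integral[OF g_int] g_nn_int g_nonneg by simp

lemma ind_int: "A \<in> sets borel \<Longrightarrow> integrable lborel (\<lambda>x. indicator A x * g x)"
  using integrable_real_mult_indicator[OF _ g_int] by (simp add: mult.commute)

lemma meas_dens: "A \<in> sets borel \<Longrightarrow> measure (density lborel g) A = (\<integral>x. indicator A x * g x \<partial>lborel)"
proof -
  assume A: "A \<in> sets borel"
  have "measure (density lborel g) A = enn2real (\<integral>\<^sup>+ x. ennreal (g x) * indicator A x \<partial>lborel)"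
    using A by (simp add: measure_def emeasure_density)
  also have "\<dots> = (\<integral>x. indicator A x * g x \<partial>lborel)"
    apply (rule enn2real_nn_integral_eq_integral)
    using A g_nonneg by (auto simp: indicator_def)
  finally show ?thesis .
qed

lemma compl_dens: "A \<in> sets borel \<Longrightarrow> 1 - measure (density lborel g) A = (\<integral>x. indicator (-A) x * g x \<partial>lborel)"
proof -
  assume A: "A \<in> sets borel"
  have "measure (density lborel g) (space (density lborel g) - A) = 1 - measure (density lborel g) A"
    using A prob_space.prob_compl[OF g_prob, of A] by simp
  moreover have "space (density lborel g) - A = -A" by auto
  ultimately show ?thesis using meas_dens[of "-A"] A by auto
qed

definition G where "G t = measure (density lborel g) {..t}"

lemma rd: "real_distribution (density lborel g)"
  unfolding real_distribution_def real_distribution_axioms_def using g_prob by simp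

lemma G_cdf: "G = cdf (density lborel g)"
  by (auto simp: G_def cdf_def)

lemma G_int: "G t = (\<integral>x. indicator {..t} x * g x \<partial>lborel)"
  unfolding G_def by (rule meas_dens) simp

lemma G_cont: "isCont G t"
proof -
  interpret real_distribution "density lborel g" by (rule rd)
  have "measure (density lborel g) {t} = (\<integral>x. indicator {t} x * g x \<partial>lborel)"
    by (rule meas_dens) simp
  also have "\<dots> = (\<integral>(x::real). 0 \<partial>lborel)"
    by (rule Bochner_Integration.integral_cong_AE) (auto intro: eventually_mono[OF AE_lborel_singleton[of t]] simp: g_meas)
  finally show ?thesis unfolding G_cdf using isCont_cdf by simp
qed

lemma G_diff: "s < t \<Longrightarrow> G t - G s = (\<integral>x. indicator {s<..t} x * g x \<partial>lborel)"
proof -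
  interpret real_distribution "density lborel g" by (rule rd)
  show "s < t \<Longrightarrow> ?thesis" unfolding G_cdf using cdf_diff_eq meas_dens by simp
qed

lemma G_mono: "s \<le> t \<Longrightarrow> G s \<le> G t"
proof -
  interpret real_distribution "density lborel g" by (rule rd)
  show "s \<le> t \<Longrightarrow> ?thesis" unfolding G_cdf using cdf_nondecreasing by simp
qed

lemma G_a: "G a = 0"
proof -
  have "G a = (\<integral>(x::real). 0 \<partial>lborel)"
    unfolding G_int
    by (rule Bochner_Integration.integral_cong_AE) (use g_zero in \<open>auto intro!: eventually_mono[OF AE_lborel_singleton[of a]] simp: indicator_def g_meas\<close>)
  then show ?thesis by simp
qed

lemma G_b: "G b = 1"
proof -
  have "G b = (\<integral>x. g x \<partial>lborel)"
    unfolding G_int by (rule Bochner_Integration.integral_cong) (use g_zero in \<open>auto simp: indicator_def\<close>)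
  then show ?thesis using g_integral by simp
qed

lemma G_nonneg: "0 \<le> G t" unfolding G_def by simp
lemma G_le1: "G t \<le> 1" unfolding G_def using prob_space.prob_le_1[OF g_prob] by simp

end
lemma pos_int:
  fixes f :: "real \<Rightarrow> real"
  assumes "integrable lborel f" "\<forall>x. 0 \<le> f x" "s < t" "\<forall>x\<in>{s<..<t}. 0 < f x"
  shows "0 < integral\<^sup>L lborel f"
proof -
  have "0 \<le> integral\<^sup>L lborel f" using assms by simp
  moreover have "integral\<^sup>L lborel f \<noteq> 0"
  proof
    assume "integral\<^sup>L lborel f = 0"
    then have "AE x in lborel. f x = 0" using integral_nonneg_eq_0_iff_AE[of lborel f] assms by simp
    then have "AE x in lborel. x \<notin> {s<..<t}" using assms(4) by (auto elim!: eventually_mono) force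
    then have "emeasure lborel {s<..<t} = 0"
      by (subst (asm) AE_iff_measurable[of "{s<..<t}"]) auto
    then show False using assms(3) by simp
  qed
  ultimately show ?thesis by simp
qed
context dens begin

lemma G_strict: "a \<le> s \<Longrightarrow> s < t \<Longrightarrow> t \<le> b \<Longrightarrow> G s < G t"
proof -
  assume st: "a \<le> s" "s < t" "t \<le> b"
  have "0 < (\<integral>x. indicator {s<..t} x * g x \<partial>lborel)"
    apply (rule pos_int[of _ s t])
    using ind_int[of "{s<..t}"] g_nonneg g_pos st by (auto simp: indicator_def)
  then show ?thesis using G_diff[OF st(2)] by simp
qed

lemma G_le_a: "t \<le> a \<Longrightarrow> G t = 0"
  using G_mono[of t a] G_a G_nonneg[of t] by simp

lemma G_ge_b: "b \<le> t \<Longrightarrow> G t = 1"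
  using G_mono[of b t] G_b G_le1[of t] by simp

lemma G_contl: "continuous_on S G"
  using G_cont by (simp add: continuous_at_imp_continuous_on)

lemma G_onto: "\<theta> \<in> {0..1} \<Longrightarrow> \<exists>t\<in>{a..b}. G t = \<theta>"
  using IVT'[of G a \<theta> b] G_a G_b ab G_contl by auto

lemma G_inj: "inj_on G {a..b}"
proof (rule inj_onI)
  fix x y assume "x \<in> {a..b}" "y \<in> {a..b}" "G x = G y"
  then show "x = y" using G_strict[of x y] G_strict[of y x]
    by (cases x y rule: linorder_cases) auto
qed

lemma quant: "\<theta> \<in> {0<..<1} \<Longrightarrow> \<exists>t. a < t \<and> t < b \<and> G t = \<theta> \<and> quantile G \<theta> = t"
proof -
  assume th: "\<theta> \<in> {0<..<1}"
  then have "\<theta> \<in> {0..1}" by simp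
  then obtain t where t: "t \<in> {a..b}" "G t = \<theta>" using G_onto by blast
  have ta: "t \<noteq> a" using t th G_a by auto
  have tb: "t \<noteq> b" using t th G_b by auto
  have "{z. \<theta> \<le> G z} = {t..}"
  proof (intro set_eqI iffI)
    fix z assume "z \<in> {z. \<theta> \<le> G z}"
    then have z: "\<theta> \<le> G z" by simp
    show "z \<in> {t..}"
    proof (rule ccontr)
      assume "z \<notin> {t..}"
      then have "z < t" by simp
      show False
      proof (cases "z \<le> a")
        case True then show ?thesis using G_le_a[OF True] z th by simp
      next
        case False then show ?thesis using G_strict[of z t] \<open>z < t\<close> t z by simp
      qed
    qed
  next
    fix z assume "z \<in> {t..}" then show "z \<in> {z. \<theta> \<le> G z}" using G_mono[of t z] t by simp
  qed
  then have "quantile G \<theta> = t" unfolding quantile_def by simp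
  then show ?thesis using t ta tb by auto
qed

lemma quant_eq: "t \<in> {a<..<b} \<Longrightarrow> quantile G (G t) = t \<and> G t \<in> {0<..<1}"
proof -
  assume t: "t \<in> {a<..<b}"
  have th: "G t \<in> {0<..<1}" using G_strict[of a t] G_strict[of t b] t G_a G_b by auto
  then obtain t' where "a < t'" "t' < b" "G t' = G t" "quantile G (G t) = t'" using quant by blast
  then show ?thesis using th t G_inj by (auto simp: inj_on_def)
qed

definition ig where "ig = inv_into {a..b} G"

lemma ig_cont: "continuous_on {0..1} ig"
proof -
  have "continuous_on (G ` {a..b}) ig" unfolding ig_def
    by (rule continuous_on_inv[OF G_contl compact_Icc]) (simp add: G_inj)
  moreover have "{0..1} \<subseteq> G ` {a..b}" using G_onto by force
  ultimately show ?thesis by (rule continuous_on_subset)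
qed

lemma ig_0: "ig 0 = a" unfolding ig_def using G_a G_inj ab
  by (metis atLeastAtMost_iff inv_into_f_f order.refl less_imp_le)
lemma ig_1: "ig 1 = b" unfolding ig_def using G_b G_inj ab
  by (metis atLeastAtMost_iff inv_into_f_f order.refl less_imp_le)

lemma ig_quant: "\<theta> \<in> {0<..<1} \<Longrightarrow> quantile G \<theta> = ig \<theta>"
proof -
  assume th: "\<theta> \<in> {0<..<1}"
  then obtain t where "a < t" "t < b" "G t = \<theta>" "quantile G \<theta> = t" using quant by blast
  then show ?thesis unfolding ig_def using G_inj by (metis atLeastAtMost_iff inv_into_f_f less_imp_le)
qed

end

lemma proj_meas:
  fixes P :: "(real^'p) measure" and u :: "real^'p"
  assumes "sets P = sets borel" "A \<in> sets borel"
  shows "measure P {x \<in> space P. u \<bullet> x \<in> A} = measure (distr P borel (\<lambda>x. u \<bullet> x)) A"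
proof -
  have m: "(\<lambda>x. u \<bullet> x) \<in> measurable P borel" proof -
    have "measurable P borel = measurable borel (borel::real measure)" by (rule measurable_cong_sets) (simp_all add: assms(1))
    then show ?thesis by simp
  qed
  have "(\<lambda>x. u \<bullet> x) -` A \<inter> space P = {x \<in> space P. u \<bullet> x \<in> A}" by auto
  then show ?thesis using measure_distr[OF m assms(2)] by simp
qed

lemma E_split:
  fixes ga gb :: "real \<Rightarrow> real"
  assumes "integrable lborel (\<lambda>x. indicator (-A) x * ga x)" "integrable lborel (\<lambda>x. indicator A x * gb x)"
  shows "pa * (\<integral>x. indicator (-A) x * ga x \<partial>lborel) + pb * (\<integral>x. indicator A x * gb x \<partial>lborel)
     = (\<integral>x. pa * (indicator (-A) x * ga x) + pb * (indicator A x * gb x) \<partial>lborel)"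
  using assms by simp

theorem theorem1:
  fixes Pa Pb :: "(real^'p) measure" and u :: "real^'p"
    and \<pi>a \<pi>b :: real and ga gb :: "real \<Rightarrow> real" and a b z0 :: real
  assumes Pa_prob: "prob_space Pa" and Pb_prob: "prob_space Pb"
    and Pa_sets: "sets Pa = sets borel" and Pb_sets: "sets Pb = sets borel"
    and Pa_ac: "absolutely_continuous lborel Pa" and Pb_ac: "absolutely_continuous lborel Pb"
    and priors: "\<pi>a > 0" "\<pi>b > 0" "\<pi>a + \<pi>b = 1"
    and unit: "norm u = 1"
    and alpha_min: "\<forall>\<theta>\<in>{0<..<1}.
          quantile (proj_cdf Pa u) \<theta> \<le> quantile (proj_cdf Pb u) \<theta>"
    and ga_meas: "ga \<in> borel_measurable borel" and gb_meas: "gb \<in> borel_measurable borel"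
    and ga_dens: "distr Pa borel (\<lambda>x. u \<bullet> x) = density lborel ga"
    and gb_dens: "distr Pb borel (\<lambda>x. u \<bullet> x) = density lborel gb"
    and dom: "a < b"
    and ga_pos: "\<forall>z\<in>{a..b}. ga z > 0" and gb_pos: "\<forall>z\<in>{a..b}. gb z > 0"
    and ga_zero: "\<forall>z. z \<notin> {a..b} \<longrightarrow> ga z = 0"
    and gb_zero: "\<forall>z. z \<notin> {a..b} \<longrightarrow> gb z = 0"
    and z0_in: "z0 \<in> {a<..<b}"
    and cross_eq: "\<pi>a * ga z0 = \<pi>b * gb z0"
    and cross_sides:
      "(\<forall>z\<in>{a..b}. (z < z0 \<longrightarrow> \<pi>a * ga z > \<pi>b * gb z) \<and> (z > z0 \<longrightarrow> \<pi>a * ga z < \<pi>b * gb z))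
     \<or> (\<forall>z\<in>{a..b}. (z < z0 \<longrightarrow> \<pi>a * ga z < \<pi>b * gb z) \<and> (z > z0 \<longrightarrow> \<pi>a * ga z > \<pi>b * gb z))"
  shows "\<exists>\<theta>\<in>{0<..<1}.
           (\<forall>\<theta>'\<in>{0<..<1}. dq_error \<pi>a Pa \<pi>b Pb u \<theta> \<le> dq_error \<pi>a Pa \<pi>b Pb u \<theta>')
         \<and> dq_error \<pi>a Pa \<pi>b Pb u \<theta> = bayes_error_proj \<pi>a Pa \<pi>b Pb u"
proof -
  have mA: "(\<lambda>x. u \<bullet> x) \<in> measurable Pa borel" proof -
    have "measurable Pa borel = measurable borel (borel::real measure)" by (rule measurable_cong_sets) (simp_all add: Pa_sets)
    then show ?thesis by simp
  qed
  have mB: "(\<lambda>x. u \<bullet> x) \<in> measurable Pb borel" proof -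
    have "measurable Pb borel = measurable borel (borel::real measure)" by (rule measurable_cong_sets) (simp_all add: Pb_sets)
    then show ?thesis by simp
  qed
  have Aprob: "prob_space (density lborel ga)" using prob_space.prob_space_distr[OF Pa_prob mA] ga_dens by simp
  interpret A: dens ga a b
    by (rule dens.intro[OF ga_meas dom ga_pos ga_zero Aprob])
  have Bprob: "prob_space (density lborel gb)" using prob_space.prob_space_distr[OF Pb_prob mB] gb_dens by simp
  interpret B: dens gb a b
    by (rule dens.intro[OF gb_meas dom gb_pos gb_zero Bprob])
  have cdfA: "proj_cdf Pa u = A.G"
  proof
    fix z
    have "{x \<in> space Pa. u \<bullet> x \<le> z} = {x \<in> space Pa. u \<bullet> x \<in> {..z}}" by auto
    then show "proj_cdf Pa u z = A.G z"
      unfolding proj_cdf_def A.G_def using proj_meas[OF Pa_sets, of "{..z}" u] ga_dens by simp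
  qed
  have cdfB: "proj_cdf Pb u = B.G"
  proof
    fix z
    have "{x \<in> space Pb. u \<bullet> x \<le> z} = {x \<in> space Pb. u \<bullet> x \<in> {..z}}" by auto
    then show "proj_cdf Pb u z = B.G z"
      unfolding proj_cdf_def B.G_def using proj_meas[OF Pb_sets, of "{..z}" u] gb_dens by simp
  qed
  have complA: "measure Pa {x \<in> space Pa. u \<bullet> x \<notin> S} = (\<integral>x. indicator (-S) x * ga x \<partial>lborel)"
    if S: "S \<in> sets borel" for S
  proof -
    have "{x \<in> space Pa. u \<bullet> x \<notin> S} = {x \<in> space Pa. u \<bullet> x \<in> -S}" by auto
    moreover have "-S \<in> sets borel" using S by auto
    ultimately show ?thesis using proj_meas[OF Pa_sets, of "-S" u] ga_dens A.meas_dens by simp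
  qed
  have measB: "measure Pb {x \<in> space Pb. u \<bullet> x \<in> S} = (\<integral>x. indicator S x * gb x \<partial>lborel)"
    if S: "S \<in> sets borel" for S
    using proj_meas[OF Pb_sets S, of u] gb_dens B.meas_dens[OF S] by simp
  define E where "E S = \<pi>a * (\<integral>x. indicator (-S) x * ga x \<partial>lborel) + \<pi>b * (\<integral>x. indicator S x * gb x \<partial>lborel)" for S
  have Et: "\<pi>a * (1 - A.G t) + \<pi>b * B.G t = E {..t}" for t
  proof -
    have "1 - A.G t = (\<integral>x. indicator (-{..t}) x * ga x \<partial>lborel)"
      unfolding A.G_def by (rule A.compl_dens) simp
    then show ?thesis unfolding E_def B.G_int by simp
  qed
  have dq: "dq_error \<pi>a Pa \<pi>b Pb u \<theta>' = E {..Q_tilde Pa Pb u \<theta>'}" for \<theta>'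
    unfolding dq_error_def cdfA cdfB by (rule Et)
  have bE: "\<pi>a * measure Pa {x \<in> space Pa. u \<bullet> x \<notin> S} + \<pi>b * measure Pb {x \<in> space Pb. u \<bullet> x \<in> S} = E S"
    if "S \<in> sets borel" for S
    unfolding E_def complA[OF that] measB[OF that] ..
  have bayes: "bayes_error_proj \<pi>a Pa \<pi>b Pb u = (INF S\<in>sets borel. E S)"
    unfolding bayes_error_proj_def
    by (rule arg_cong[where f=Inf], rule image_cong[OF refl], rule bE)
  have z0ab: "a < z0" "z0 < b" using z0_in by auto
  have c1: "\<forall>z\<in>{a..b}. (z < z0 \<longrightarrow> \<pi>a * ga z > \<pi>b * gb z) \<and> (z > z0 \<longrightarrow> \<pi>a * ga z < \<pi>b * gb z)"
  proof (rule ccontr)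
    assume nc: "\<not> (\<forall>z\<in>{a..b}. (z < z0 \<longrightarrow> \<pi>a * ga z > \<pi>b * gb z) \<and> (z > z0 \<longrightarrow> \<pi>a * ga z < \<pi>b * gb z))"
    then have c2: "\<forall>z\<in>{a..b}. (z < z0 \<longrightarrow> \<pi>a * ga z < \<pi>b * gb z) \<and> (z > z0 \<longrightarrow> \<pi>a * ga z > \<pi>b * gb z)"
      using cross_sides by blast
    have lt: "A.G z0 < B.G z0"
    proof (cases "\<pi>a \<le> \<pi>b")
      case True
      have gt: "gb z < ga z" if z: "z \<in> {z0<..b}" for z
      proof -
        have "\<pi>b * gb z < \<pi>a * ga z" using c2 z z0ab by auto
        moreover have "\<pi>a * gb z \<le> \<pi>b * gb z" by (rule mult_right_mono[OF True B.g_nonneg])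
        ultimately have "\<pi>a * gb z < \<pi>a * ga z" by linarith
        then show ?thesis using priors(1) by simp
      qed
      define f where "f x = indicator {z0<..b} x * ga x - indicator {z0<..b} x * gb x" for x
      have "0 < integral\<^sup>L lborel f"
      proof (rule pos_int[of _ z0 b])
        show "integrable lborel f" unfolding f_def using A.ind_int B.ind_int by simp
        show "\<forall>x. 0 \<le> f x" unfolding f_def using gt by (auto simp: indicator_def less_imp_le)
        show "\<forall>x\<in>{z0<..<b}. 0 < f x" unfolding f_def using gt by (auto simp: indicator_def)
      qed (use z0ab in auto)
      moreover have "integral\<^sup>L lborel f = (A.G b - A.G z0) - (B.G b - B.G z0)"
        unfolding f_def A.G_diff[OF z0ab(2)] B.G_diff[OF z0ab(2)]
        using A.ind_int B.ind_int by simp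
      ultimately show ?thesis using A.G_b B.G_b by simp
    next
      case False
      have gt: "ga z < gb z" if z: "z \<in> {a<..<z0}" for z
      proof -
        have "\<pi>a * ga z < \<pi>b * gb z" using c2 z z0ab by auto
        moreover have "\<pi>b * gb z \<le> \<pi>a * gb z" using False B.g_nonneg[of z] by (simp add: mult_right_mono)
        ultimately have "\<pi>a * ga z < \<pi>a * gb z" by linarith
        then show ?thesis using priors(1) by simp
      qed
      have ge0: "ga z0 \<le> gb z0"
      proof -
        have "\<pi>b * gb z0 \<le> \<pi>a * gb z0" using False B.g_nonneg[of z0] by (simp add: mult_right_mono)
        then have "\<pi>a * ga z0 \<le> \<pi>a * gb z0" using cross_eq by simp
        then show ?thesis using priors(1) by simp
      qed
      define f where "f x = indicator {a<..z0} x * gb x - indicator {a<..z0} x * ga x" for x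
      have "0 < integral\<^sup>L lborel f"
      proof (rule pos_int[of _ a z0])
        show "integrable lborel f" unfolding f_def using A.ind_int B.ind_int by simp
        show "\<forall>x. 0 \<le> f x" unfolding f_def using gt ge0
          by (auto simp: indicator_def less_imp_le) (metis le_less less_imp_le)
        show "\<forall>x\<in>{a<..<z0}. 0 < f x" unfolding f_def using gt by (auto simp: indicator_def)
      qed (use z0ab in auto)
      moreover have "integral\<^sup>L lborel f = (B.G z0 - B.G a) - (A.G z0 - A.G a)"
        unfolding f_def A.G_diff[OF z0ab(1)] B.G_diff[OF z0ab(1)]
        using A.ind_int B.ind_int by simp
      ultimately show ?thesis using A.G_a B.G_a by simp
    qed
    have qB: "quantile B.G (B.G z0) = z0" and th: "B.G z0 \<in> {0<..<1}"
      using B.quant_eq[of z0] z0_in by auto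
    obtain t where t: "A.G t = B.G z0" "quantile A.G (B.G z0) = t" using A.quant[OF th] by blast
    have "quantile A.G (B.G z0) \<le> quantile B.G (B.G z0)" using alpha_min th unfolding cdfA cdfB by blast
    then have "t \<le> z0" using qB t by simp
    then have "A.G t \<le> A.G z0" by (rule A.G_mono)
    then show False using lt t by simp
  qed
  have key1: "\<pi>b * gb x \<le> \<pi>a * ga x" if "x \<le> z0" for x
  proof (cases "x \<in> {a..b}")
    case True
    then show ?thesis using c1 cross_eq that by (cases "x = z0") (auto simp: less_imp_le)
  next
    case False then show ?thesis using ga_zero gb_zero by simp
  qed
  have key2: "\<pi>a * ga x \<le> \<pi>b * gb x" if "z0 < x" for x
  proof (cases "x \<in> {a..b}")
    case True
    then show ?thesis using c1 that by (auto simp: less_imp_le)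
  next
    case False then show ?thesis using ga_zero gb_zero by simp
  qed
  have Emin: "E {..z0} \<le> E S" if S: "S \<in> sets borel" for S
  proof -
    have Sc: "-S \<in> sets borel" using S by auto
    have "E {..z0} = (\<integral>x. \<pi>a * (indicator (-{..z0}) x * ga x) + \<pi>b * (indicator {..z0} x * gb x) \<partial>lborel)"
      unfolding E_def by (rule E_split) (auto intro!: A.ind_int B.ind_int)
    also have "\<dots> \<le> (\<integral>x. \<pi>a * (indicator (-S) x * ga x) + \<pi>b * (indicator S x * gb x) \<partial>lborel)"
    proof (rule integral_mono)
      show "integrable lborel (\<lambda>x. \<pi>a * (indicator (-{..z0}) x * ga x) + \<pi>b * (indicator {..z0} x * gb x))"
        using A.ind_int[of "-{..z0}"] B.ind_int[of "{..z0}"] by simp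
      show "integrable lborel (\<lambda>x. \<pi>a * (indicator (-S) x * ga x) + \<pi>b * (indicator S x * gb x))"
        using A.ind_int[OF Sc] B.ind_int[OF S] by simp
      fix x
      show "\<pi>a * (indicator (-{..z0}) x * ga x) + \<pi>b * (indicator {..z0} x * gb x)
          \<le> \<pi>a * (indicator (-S) x * ga x) + \<pi>b * (indicator S x * gb x)"
      proof (cases "x \<le> z0")
        case True then show ?thesis using key1[OF True] by (cases "x \<in> S") (auto simp: indicator_def)
      next
        case False then have "z0 < x" by simp
        then show ?thesis using key2[of x] False by (cases "x \<in> S") (auto simp: indicator_def)
      qed
    qed
    also have "\<dots> = E S"
      unfolding E_def by (rule E_split[symmetric]) (auto intro!: A.ind_int B.ind_int S Sc)
    finally show ?thesis .
  qed
  define F where "F \<theta> = \<theta> * A.ig \<theta> + (1 - \<theta>) * B.ig \<theta>" for \<theta>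
  have Fc: "continuous_on {0..1} F" unfolding F_def
    by (intro continuous_intros A.ig_cont B.ig_cont)
  have F0: "F 0 = a" unfolding F_def using B.ig_0 by simp
  have F1: "F 1 = b" unfolding F_def using A.ig_1 by simp
  obtain \<theta> where th01: "0 \<le> \<theta>" "\<theta> \<le> 1" and Fth: "F \<theta> = z0"
    using IVT'[of F 0 z0 1] Fc F0 F1 z0ab by auto
  have th: "\<theta> \<in> {0<..<1}" using th01 Fth F0 F1 z0ab
    by (cases "\<theta> = 0"; cases "\<theta> = 1") auto
  have Qt: "Q_tilde Pa Pb u \<theta> = z0"
    unfolding Q_tilde_def cdfA cdfB A.ig_quant[OF th] B.ig_quant[OF th] using Fth F_def by simp
  have dqt: "dq_error \<pi>a Pa \<pi>b Pb u \<theta> = E {..z0}" using dq Qt by simp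
  have inf: "(INF S\<in>sets borel. E S) = E {..z0}"
    by (rule cInf_eq_minimum) (auto intro: Emin)
  show ?thesis
  proof (rule bexI[OF _ th], intro conjI ballI)
    fix \<theta>' :: real assume "\<theta>' \<in> {0<..<1}"
    show "dq_error \<pi>a Pa \<pi>b Pb u \<theta> \<le> dq_error \<pi>a Pa \<pi>b Pb u \<theta>'"
      unfolding dqt dq[of \<theta>'] by (rule Emin) simp
  next
    show "dq_error \<pi>a Pa \<pi>b Pb u \<theta> = bayes_error_proj \<pi>a Pa \<pi>b Pb u"
      unfolding dqt bayes inf ..
  qed
qed

end
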